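(* Suppose that $2\le n_0<\infty$, that $S$ is submultiplicative on $[1,n_0]$, and that $S(n_0)=K\ge 2$. Then there exist $N_0>n_0$ and an extension of $S$ to $[1,N_0]$ which is submultiplicative on $[1,N_0]$ and satisfies $S(N_0)\ge 3K/2$.
   Context: Let $2\le n_0\le\infty$ and let $S$ be a real-valued function on $[1,n_0]$ (on $[1,\infty)$ if $n_0=\infty$). $S$ is called submultiplicative on $[1,n_0]$ if: (a) $S$ is piecewise-linear, continuous, strictly increasing and concave; (b) $S(x)=x$ for $1\le x\le 2$; (c) $S(xy)\le S(x)S(y)$ for all $x,y$ with $1\le x,y,xy\le n_0$. *)

theory Defs
  imports "HOL-Analysis.Analysis"
begin

definition piecewise_linear_on :: "real \<Rightarrow> real \<Rightarrow> (real \<Rightarrow> real) \<Rightarrow> bool" where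
  "piecewise_linear_on a b S \<longleftrightarrow>
     (\<exists>ps :: real list. ps \<noteq> [] \<and> sorted_wrt (<) ps \<and> hd ps = a \<and> last ps = b \<and>
        (\<forall>i. Suc i < length ps \<longrightarrow>
           (\<exists>m c. \<forall>x\<in>{ps ! i .. ps ! Suc i}. S x = m * x + c)))"

definition submultiplicative_on :: "real \<Rightarrow> (real \<Rightarrow> real) \<Rightarrow> bool" where
  "submultiplicative_on n0 S \<longleftrightarrow>
     piecewise_linear_on 1 n0 S \<and>
     continuous_on {1..n0} S \<and>
     strict_mono_on {1..n0} S \<and>
     concave_on {1..n0} S \<and>
     (\<forall>x\<in>{1..2}. S x = x) \<and>
     (\<forall>x y. 1 \<le> x \<longrightarrow> 1 \<le> y \<longrightarrow> x * y \<le> n0 \<longrightarrow> S (x * y) \<le> S x * S y)"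

end

theory Submission
  imports Defs
begin

lemma chord3:
  fixes f :: "real \<Rightarrow> real"
  assumes "concave_on I f" "a \<in> I" "c \<in> I" "a \<le> b" "b \<le> c"
  shows "f b * (c - a) \<ge> f a * (c - b) + f c * (b - a)"
proof (cases "a = c")
  case True then show ?thesis using assms by simp
next
  case False
  then have ac: "a < c" using assms by simp
  define t where "t = (b - a) / (c - a)"
  have t0: "t \<ge> 0" "t \<le> 1" using ac assms by (auto simp: t_def field_simps)
  have tca: "t * (c - a) = b - a" using ac by (simp add: t_def)
  have bt: "(1 - t) *\<^sub>R a + t *\<^sub>R c = b"
  proof -
    have "(1 - t) *\<^sub>R a + t *\<^sub>R c = a + t * (c - a)" by (simp add: algebra_simps)
    then show ?thesis using tca by simp
  qed
  have "f ((1 - t) *\<^sub>R a + t *\<^sub>R c) \<ge> (1 - t) * f a + t * f c"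
    using concave_onD[OF assms(1) t0 assms(2,3)] .
  then have "f b \<ge> (1 - t) * f a + t * f c" using bt by simp
  then have "f b * (c - a) \<ge> ((1 - t) * f a + t * f c) * (c - a)"
    using ac by (intro mult_right_mono) auto
  also have "((1 - t) * f a + t * f c) * (c - a) = f a * (c - a) + (f c - f a) * (t * (c - a))"
    by (simp add: algebra_simps)
  also have "\<dots> = f a * (c - b) + f c * (b - a)"
    unfolding tca by (simp add: algebra_simps)
  finally show ?thesis .
qed

lemma cancel_pos: "a * c \<le> b * c \<Longrightarrow> c > 0 \<Longrightarrow> a \<le> (b::real)"
  by (simp add: mult_le_cancel_right)

lemma sorted_le_last:
  fixes ps :: "real list"
  assumes "sorted_wrt (<) ps" "x \<in> set ps"
  shows "x \<le> last ps"
  using assms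
proof (induction ps)
  case Nil then show ?case by simp
next
  case (Cons a ps)
  show ?case
  proof (cases "ps = []")
    case True then show ?thesis using Cons by simp
  next
    case False
    then have lp: "last ps \<in> set ps" by simp
    show ?thesis
    proof (cases "x = a")
      case True
      then show ?thesis using Cons.prems(1) lp False by (simp add: less_imp_le)
    next
      case xa: False
      then have "x \<in> set ps" using Cons.prems by simp
      then show ?thesis using Cons False by simp
    qed
  qed
qed

theorem lemma2p4:
  fixes S :: "real \<Rightarrow> real" and n0 K :: real
  assumes "2 \<le> n0"
    and "submultiplicative_on n0 S"
    and "S n0 = K"
    and "K \<ge> 2"
  shows "\<exists>N0 T. N0 > n0 \<and> (\<forall>x\<in>{1..n0}. T x = S x) \<and>
           submultiplicative_on N0 T \<and> T N0 \<ge> 3 * K / 2"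
proof -
  note n0 = assms(1) and SK = assms(3) and K2 = assms(4)
  from assms(2) obtain ps where ps: "ps \<noteq> []" "sorted_wrt (<) ps" "hd ps = 1" "last ps = n0"
      "\<And>i. Suc i < length ps \<Longrightarrow> (\<exists>m c. \<forall>x\<in>{ps ! i .. ps ! Suc i}. S x = m * x + c)"
    unfolding submultiplicative_on_def piecewise_linear_on_def by blast
  have contS: "continuous_on {1..n0} S" and smS: "strict_mono_on {1..n0} S"
    and ccS: "concave_on {1..n0} S" and idS: "\<And>x. x \<in> {1..2} \<Longrightarrow> S x = x"
    and subS: "\<And>x y. 1 \<le> x \<Longrightarrow> 1 \<le> y \<Longrightarrow> x * y \<le> n0 \<Longrightarrow> S (x * y) \<le> S x * S y"
    using assms(2) unfolding submultiplicative_on_def by blast+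
  have len: "length ps \<ge> 2"
  proof (rule ccontr)
    assume "\<not> length ps \<ge> 2"
    moreover have "length ps \<noteq> 0" using ps(1) by simp
    ultimately have "length ps = Suc 0" by linarith
    then obtain a where "ps = [a]" by (auto simp: length_Suc_conv)
    then show False using ps n0 by simp
  qed
  define j where "j = length ps - 2"
  have j: "Suc j < length ps" "Suc j = length ps - 1" using len by (auto simp: j_def)
  obtain m c where mc: "\<forall>x\<in>{ps ! j .. ps ! Suc j}. S x = m * x + c" using ps(5)[OF j(1)] by blast
  have lastj: "ps ! Suc j = n0" using ps(4) last_conv_nth[OF ps(1)] j by simp
  have pj: "ps ! j < n0" using sorted_wrt_nth_less[OF ps(2), of j "Suc j"] j lastj by simp
  define q where "q = max (ps ! j) 1"
  have q: "q < n0" "1 \<le> q" using pj n0 by (auto simp: q_def)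
  have lin: "\<And>x. x \<in> {q..n0} \<Longrightarrow> S x = m * x + c" using mc lastj by (auto simp: q_def)
  have Sn0: "S n0 = m * n0 + c" using lin q by simp
  have Sq: "S q = m * q + c" using lin q by simp
  have "S q < S n0" using strict_mono_onD[OF smS, of q n0] q by simp
  then have "m * q < m * n0" using Sn0 Sq by simp
  then have mpos: "m > 0" using mult_less_cancel_left[of m q n0] q by auto
  have Kn0: "K \<le> n0"
  proof -
    have "S 2 * (n0 - 1) \<ge> S 1 * (n0 - 2) + S n0 * (2 - 1)"
      using chord3[OF ccS, of 1 n0 2] n0 by simp
    moreover have "S 2 = 2" "S 1 = 1" using idS by auto
    ultimately show ?thesis using SK by simp
  qed
  have F2: "\<And>x. x \<in> {1..n0} \<Longrightarrow> S x * n0 \<ge> K * x"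
  proof -
    fix x assume x: "x \<in> {1..n0}"
    have "S x * (n0 - 1) \<ge> S 1 * (n0 - x) + S n0 * (x - 1)"
      using chord3[OF ccS, of 1 n0 x] x n0 by simp
    then have h: "S x * (n0 - 1) \<ge> (n0 - x) + K * (x - 1)" using idS[of 1] SK by simp
    have p1: "(n0 - x) * (n0 - K) \<ge> 0" using x Kn0 by simp
    have p2: "n0 * (S x * (n0 - 1) - ((n0 - x) + K * (x - 1))) \<ge> 0" using h n0 by simp
    have "S x * n0 * (n0 - 1) - K * x * (n0 - 1)
        = n0 * (S x * (n0 - 1) - ((n0 - x) + K * (x - 1))) + (n0 - x) * (n0 - K)"
      by (simp add: algebra_simps)
    then have "K * x * (n0 - 1) \<le> S x * n0 * (n0 - 1)" using p1 p2 by linarith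
    then show "S x * n0 \<ge> K * x" by (rule cancel_pos) (use n0 in simp)
  qed
  have G: "\<And>u. u \<in> {1..n0} \<Longrightarrow> K - S u \<ge> m * (n0 - u)"
  proof -
    fix u assume u: "u \<in> {1..n0}"
    show "K - S u \<ge> m * (n0 - u)"
    proof (cases "u \<ge> q")
      case True
      then show ?thesis using lin[of u] u Sn0 SK by (simp add: algebra_simps)
    next
      case False
      have "S q * (n0 - u) \<ge> S u * (n0 - q) + S n0 * (q - u)"
        using chord3[OF ccS, of u n0 q] u q False by simp
      then have "(K - m * (n0 - q)) * (n0 - u) \<ge> S u * (n0 - q) + K * (q - u)"
        using Sq Sn0 SK by (simp add: algebra_simps)
      then have "(K - S u) * (n0 - q) \<ge> (m * (n0 - u)) * (n0 - q)"
        by (simp add: algebra_simps)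
      then show ?thesis by (rule cancel_pos) (use q in simp)
    qed
  qed
  have F3: "\<And>u y. 1 \<le> u \<Longrightarrow> u \<le> y \<Longrightarrow> y \<le> n0 \<Longrightarrow> S y - S u \<ge> m * (y - u)"
  proof -
    fix u y assume uy: "1 \<le> u" "u \<le> y" "y \<le> n0"
    show "S y - S u \<ge> m * (y - u)"
    proof (cases "u = n0")
      case True then show ?thesis using uy by simp
    next
      case False
      then have un: "u < n0" using uy by simp
      have "S y * (n0 - u) \<ge> S u * (n0 - y) + S n0 * (y - u)"
        using chord3[OF ccS, of u n0 y] uy by simp
      then have h1: "(S y - S u) * (n0 - u) \<ge> (K - S u) * (y - u)" using SK by (simp add: algebra_simps)
      have "(K - S u) * (y - u) \<ge> m * (n0 - u) * (y - u)"
        using G[of u] uy by (intro mult_right_mono) auto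
      then have "(S y - S u) * (n0 - u) \<ge> (m * (y - u)) * (n0 - u)" using h1 by (simp add: algebra_simps)
      then show ?thesis by (rule cancel_pos) (use un in simp)
    qed
  qed
  define s where "s = min m 1 * K / (2 * n0)"
  have spos: "s > 0" using mpos K2 n0 by (simp add: s_def)
  have s_le_m: "s \<le> m"
  proof -
    have "min m 1 * K / (2 * n0) \<le> min m 1 * 1"
      using Kn0 n0 mpos by (intro mult_imp_div_pos_le) (auto intro: mult_left_mono)
    then show ?thesis by (simp add: s_def)
  qed
  have s_n0: "s * n0 \<le> K / 2"
  proof -
    have "s * n0 = min m 1 * K / 2" using n0 by (simp add: s_def)
    also have "\<dots> \<le> 1 * K / 2" using K2 by (intro divide_right_mono mult_right_mono) auto
    finally show ?thesis by simp
  qed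
  have s_mK: "s * n0 \<le> m * K"
  proof -
    have "s * n0 = min m 1 * K / 2" using n0 by (simp add: s_def)
    also have "\<dots> \<le> m * K / 2" using K2 by (intro divide_right_mono mult_right_mono) auto
    also have "\<dots> \<le> m * K" using K2 mpos by simp
    finally show ?thesis .
  qed
  define N0 where "N0 = n0 + K / (2 * s)"
  define T where "T = (\<lambda>x. if x \<le> n0 then S x else K + s * (x - n0))"
  have N0gt: "N0 > n0" using spos K2 by (simp add: N0_def)
  have sN0: "s * (N0 - n0) = K / 2" using spos by (simp add: N0_def)
  have TN0: "T N0 = 3 * K / 2" using N0gt sN0 by (simp add: T_def)
  have TS: "\<And>x. x \<le> n0 \<Longrightarrow> T x = S x" by (simp add: T_def)
  have TL: "\<And>x. x \<ge> n0 \<Longrightarrow> T x = K + s * (x - n0)" using SK by (simp add: T_def)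
  have SleL: "\<And>a. a \<in> {1..n0} \<Longrightarrow> S a \<le> K - s * (n0 - a)"
  proof -
    fix a assume a: "a \<in> {1..n0}"
    have "s * (n0 - a) \<le> m * (n0 - a)" using s_le_m a by (intro mult_right_mono) auto
    then show "S a \<le> K - s * (n0 - a)" using G[OF a] by simp
  qed
  have Smono: "\<And>x y. 1 \<le> x \<Longrightarrow> x \<le> y \<Longrightarrow> y \<le> n0 \<Longrightarrow> S x \<le> S y"
    using strict_mono_onD[OF smS] by (metis atLeastAtMost_iff order.order_iff_strict order_trans)
  have pl: "piecewise_linear_on 1 N0 T"
    unfolding piecewise_linear_on_def
  proof (intro exI[of _ "ps @ [N0]"] conjI allI impI)
    show "ps @ [N0] \<noteq> []" by simp
    show "hd (ps @ [N0]) = 1" using ps by simp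
    show "last (ps @ [N0]) = N0" by simp
    show "sorted_wrt (<) (ps @ [N0])"
      using ps(2) sorted_le_last[OF ps(2)] ps(4) N0gt
      by (auto simp: sorted_wrt_append intro: le_less_trans)
  next
    fix i assume i: "Suc i < length (ps @ [N0])"
    show "\<exists>m c. \<forall>x\<in>{(ps @ [N0]) ! i..(ps @ [N0]) ! Suc i}. T x = m * x + c"
    proof (cases "Suc i < length ps")
      case True
      obtain m' c' where mc': "\<forall>x\<in>{ps ! i .. ps ! Suc i}. S x = m' * x + c'" using ps(5)[OF True] by blast
      have "ps ! Suc i \<le> n0" using sorted_le_last[OF ps(2)] ps(4) True nth_mem by metis
      then have "\<forall>x\<in>{ps ! i .. ps ! Suc i}. T x = m' * x + c'" using mc' TS by auto
      then show ?thesis using True by (auto simp: nth_append)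
    next
      case False
      then have ii: "Suc i = length ps" using i by simp
      then have ii2: "i = length ps - 1" by simp
      have "(ps @ [N0]) ! i = n0" using ps(4) last_conv_nth[OF ps(1)] ii ii2 by (simp add: nth_append)
      moreover have "(ps @ [N0]) ! Suc i = N0" using ii by simp
      moreover have "\<forall>x\<in>{n0..N0}. T x = s * x + (K - s * n0)" using TL by (auto simp: algebra_simps)
      ultimately show ?thesis by metis
    qed
  qed
  have cont: "continuous_on {1..N0} T"
  proof -
    have c1: "continuous_on {1..n0} T" using contS by (rule continuous_on_eq) (simp add: TS)
    have "continuous_on {n0..N0} (\<lambda>x. K + s * (x - n0))" by (intro continuous_intros)
    then have c2: "continuous_on {n0..N0} T" by (rule continuous_on_eq) (simp add: TL)
    have "{1..N0} = {1..n0} \<union> {n0..N0}" using n0 N0gt by auto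
    then show ?thesis using continuous_on_closed_Un[OF _ _ c1 c2] by simp
  qed
  have sm: "strict_mono_on {1..N0} T"
  proof (rule strict_mono_onI)
    fix x y assume xy: "x \<in> {1..N0}" "y \<in> {1..N0}" "x < y"
    show "T x < T y"
    proof (cases "y \<le> n0")
      case True then show ?thesis using xy strict_mono_onD[OF smS, of x y] TS by auto
    next
      case False
      show ?thesis
      proof (cases "x \<le> n0")
        case True
        have "S x \<le> K" using Smono[of x n0] True xy SK by simp
        moreover have "s * (y - n0) > 0" using spos \<open>\<not> y \<le> n0\<close> by simp
        ultimately show ?thesis using True \<open>\<not> y \<le> n0\<close> TS TL[of y] by simp
      next
        case False
        then show ?thesis using xy spos TL by simp
      qed
    qed
  qed
  have cc: "concave_on {1..N0} T"
  proof (rule concave_on_linorderI)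
    show "convex {1..N0}" by simp
    fix t a b :: real assume t: "0 < t" "t < 1" and ab: "a \<in> {1..N0}" "b \<in> {1..N0}" "a < b"
    define z where "z = (1 - t) * a + t * b"
    have e1: "z - a = t * (b - a)" by (simp add: z_def algebra_simps)
    have e2: "b - z = (1 - t) * (b - a)" by (simp add: z_def algebra_simps)
    have e3: "t * (b - a) \<ge> 0" using t ab by simp
    have e4: "(1 - t) * (b - a) \<ge> 0" using t ab by simp
    have za1: "a \<le> z" using e1 e3 by linarith
    have za2: "z \<le> b" using e2 e4 by linarith
    note za = za1 za2
    have "T z \<ge> (1 - t) * T a + t * T b"
    proof (cases "b \<le> n0")
      case True
      have "S ((1 - t) *\<^sub>R a + t *\<^sub>R b) \<ge> (1 - t) * S a + t * S b"
        using concave_onD[OF ccS, of t a b] t ab True by simp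
      then show ?thesis using TS True za ab by (simp add: z_def)
    next
      case bF: False
      show ?thesis
      proof (cases "a \<ge> n0")
        case True
        have "T z = K + s * (z - n0)" "T a = K + s * (a - n0)" "T b = K + s * (b - n0)"
          using TL True za ab by auto
        note h = this
        show ?thesis by (simp only: h) (simp add: z_def algebra_simps)
      next
        case False
        have Ta: "T a = S a" "T b = K + s * (b - n0)" using False bF TS TL by auto
        have Sa: "S a \<le> K - s * (n0 - a)" using SleL ab False by simp
        show ?thesis
        proof (cases "z \<ge> n0")
          case True
          have "(1 - t) * S a \<le> (1 - t) * (K - s * (n0 - a))" using Sa t by simp
          moreover have "T z = K + s * (z - n0)" using TL[OF True] .
          ultimately show ?thesis unfolding Ta by (simp only:) (simp add: z_def algebra_simps)
        next
          case zF: False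
          have ch: "S z * (n0 - a) \<ge> S a * (n0 - z) + K * (z - a)"
            using chord3[OF ccS, of a n0 z] ab za zF SK by simp
          have zt: "z - a = t * (b - a)" by (simp add: z_def algebra_simps)
          have key: "s * (n0 - a) \<le> K - S a" using Sa by simp
          have "((1 - t) * S a + t * (K + s * (b - n0))) * (n0 - a)
                = S a * (n0 - a) + t * ((K - S a) * (n0 - a) + s * (n0 - a) * (b - n0))"
            by (simp add: algebra_simps)
          also have "\<dots> \<le> S a * (n0 - a) + t * ((K - S a) * (n0 - a) + (K - S a) * (b - n0))"
            using key t bF by (intro add_left_mono mult_left_mono mult_right_mono) auto
          also have "\<dots> = S a * (n0 - a) + (K - S a) * (t * (b - a))"
            by (simp add: algebra_simps)
          also have "\<dots> = S a * (n0 - a) + (K - S a) * (z - a)"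
            unfolding zt ..
          also have "\<dots> = S a * (n0 - z) + K * (z - a)"
            by (simp add: algebra_simps)
          also have "\<dots> \<le> S z * (n0 - a)" using ch .
          finally have "((1 - t) * S a + t * (K + s * (b - n0))) * (n0 - a) \<le> S z * (n0 - a)" .
          then have "(1 - t) * S a + t * (K + s * (b - n0)) \<le> S z"
            by (rule cancel_pos) (use False in simp)
          then show ?thesis using Ta TS zF by simp
        qed
      qed
    qed
    then show "T ((1 - t) *\<^sub>R a + t *\<^sub>R b) \<ge> (1 - t) * T a + t * T b" by (simp add: z_def)
  qed
  have id: "\<forall>x\<in>{1..2}. T x = x" using idS TS n0 by auto
  have caseB: "\<And>x y. 1 \<le> x \<Longrightarrow> n0 < y \<Longrightarrow> x * y \<le> N0 \<Longrightarrow> T (x * y) \<le> T x * T y"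
  proof -
    fix x y assume xy: "1 \<le> x" "n0 < y" "x * y \<le> N0"
    have "y \<le> x * y" using mult_right_mono[of 1 x y] xy n0 by simp
    then have Txy: "T (x * y) = K + s * (x * y - n0)" using TL xy by simp
    have Ty: "T y = K + s * (y - n0)" using TL xy by simp
    show "T (x * y) \<le> T x * T y"
    proof (cases "x \<le> 2")
      case True
      have Tx: "T x = x" using id True xy by simp
      have "s * n0 * (x - 1) \<le> K * (x - 1)" using s_n0 xy K2 by (intro mult_right_mono) auto
      then show ?thesis unfolding Tx Txy Ty by (simp add: algebra_simps)
    next
      case False
      have Tx2: "T x \<ge> 2"
      proof (cases "x \<le> n0")
        case True then show ?thesis using Smono[of 2 x] idS[of 2] TS False by simp
      next
        case False
        then have "s * (x - n0) \<ge> 0" using spos by simp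
        then show ?thesis using TL[of x] False K2 by simp
      qed
      have TyK: "T y \<ge> K" using Ty spos xy by simp
      have "2 * K \<le> T x * T y" using Tx2 TyK K2 by (intro mult_mono) auto
      moreover have "s * (x * y - n0) \<le> s * (N0 - n0)" using xy spos by simp
      ultimately show ?thesis using Txy sN0 K2 by linarith
    qed
  qed
  have submul: "\<forall>x y. 1 \<le> x \<longrightarrow> 1 \<le> y \<longrightarrow> x * y \<le> N0 \<longrightarrow> T (x * y) \<le> T x * T y"
  proof (intro allI impI)
    fix x y :: real assume xy: "1 \<le> x" "1 \<le> y" "x * y \<le> N0"
    have xle1: "x \<le> x * y" using mult_left_mono[of 1 y x] xy by simp
    have xle2: "y \<le> x * y" using mult_right_mono[of 1 x y] xy by simp
    note xle = xle1 xle2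
    show "T (x * y) \<le> T x * T y"
    proof (cases "y > n0")
      case True then show ?thesis using caseB xy by simp
    next
      case yF: False
      show ?thesis
      proof (cases "x > n0")
        case True then show ?thesis using caseB[of y x] xy by (simp add: mult.commute)
      next
        case xF: False
        show ?thesis
        proof (cases "x * y \<le> n0")
          case True
          then have "x \<le> n0" "y \<le> n0" using xle by linarith+
          then show ?thesis using subS[of x y] xy TS[of x] TS[of y] TS[of "x*y"] True by simp
        next
          case False
          have Txy: "T (x * y) = K + s * (x * y - n0)" using TL False by simp
          define u where "u = n0 / x"
          have xpos: "x > 0" using xy by simp
          have xu: "x * u = n0" using xpos by (simp add: u_def)
          have u1: "1 \<le> u" using xF xpos by (simp add: u_def)
          have uy: "u \<le> y" using False xpos by (simp add: u_def pos_divide_le_eq mult.commute)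
          have "K \<le> S x * S u" using subS[of x u] xy u1 xu SK by simp
          moreover have "S y - S u \<ge> m * (y - u)" using F3[of u y] u1 uy yF by simp
          moreover have "S x \<ge> 0"
          proof -
            have "0 < K * x" using K2 xpos by simp
            also have "\<dots> \<le> S x * n0" using F2[of x] xy xF by simp
            finally show ?thesis using n0 by (simp add: zero_less_mult_iff)
          qed
          ultimately have h: "S x * S y \<ge> K + S x * (m * (y - u))"
          proof -
            assume a1: "K \<le> S x * S u" and a2: "S y - S u \<ge> m * (y - u)" and a3: "S x \<ge> 0"
            have "S x * (m * (y - u)) \<le> S x * (S y - S u)" using a2 a3 by (rule mult_left_mono)
            then show ?thesis using a1 by (simp add: algebra_simps)
          qed
          have "S x * n0 * (m * (y - u)) \<ge> K * x * (m * (y - u))"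
            using F2[of x] xy xF mpos uy by (intro mult_right_mono) auto
          moreover have "K * x * (m * (y - u)) \<ge> s * n0 * x * (y - u)"
          proof -
            have "s * n0 * (x * (y - u)) \<le> m * K * (x * (y - u))"
              using s_mK xpos uy by (intro mult_right_mono) auto
            then show ?thesis by (simp add: algebra_simps)
          qed
          ultimately have "S x * (m * (y - u)) * n0 \<ge> (s * x * (y - u)) * n0"
            by (simp add: algebra_simps)
          then have "S x * (m * (y - u)) \<ge> s * x * (y - u)" by (rule cancel_pos) (use n0 in simp)
          moreover have "s * x * (y - u) = s * (x * y - n0)" using xu by (simp add: algebra_simps)
          ultimately show ?thesis using h Txy TS xF yF by simp
        qed
      qed
    qed
  qed
  have "submultiplicative_on N0 T"
    unfolding submultiplicative_on_def using pl cont sm cc id submul by blast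
  moreover have "\<forall>x\<in>{1..n0}. T x = S x" using TS by simp
  ultimately show ?thesis using N0gt TN0 by (intro exI[of _ N0] exI[of _ T]) simp
qed

end
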